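(* For every sequence $(k_n)_{n\ge 2}$ with $k_n\in\{2,\dots,n\}$ and $k_n\to\infty$, there exist probability distributions $P,Q$ on $\mathbb{R}$ (not depending on $n$), each absolutely continuous with respect to the other, such that the optimal risk $R(T^* )$ in the weighted hidden clique problem with parameters $n,k_n,P,Q$ satisfies $R(T^* )\to 0$ as $n\to\infty$.
   Context: Weighted hidden clique model. For $n\ge 2$ and $k\in\{2,\dots,n\}$, let $E=\{(i,j):1\le i<j\le n\}$ and for $S\subseteq[n]$ let $E(S)=\{(i,j):i,j\in S,\ i<j\}$. The observation is $\mathbf{X}=(X_e)_{e\in E}$. Under $\mathcal{H}_0$ (law $\mathbb{P}_0$) the $X_e$ are i.i.d. $P$. Under $\mathcal{H}_1$ (law $\mathbb{P}_1$) a uniformly random $k$-subset $S^*\subseteq[n]$ is chosen and, conditionally on $S^*$, the $X_e$ are independent with $X_e\sim Q$ for $e\in E(S^* )$ and $X_e\sim P$ otherwise. The risk of a test $T:\mathbb{R}^{\binom n2}\to\{0,1\}$ is $R(T)=\mathbb{P}_0(T=1)+\mathbb{P}_1(T=0)$, and $R(T^* )=\inf_T R(T)$ is the optimal risk. *)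

theory Defs
  imports "HOL-Probability.Probability"
begin

definition hc_edges :: "nat \<Rightarrow> (nat \<times> nat) set" where
  "hc_edges n = {(i, j). 1 \<le> i \<and> i < j \<and> j \<le> n}"

definition hc_clique_edges :: "nat set \<Rightarrow> (nat \<times> nat) set" where
  "hc_clique_edges S = {(i, j). i \<in> S \<and> j \<in> S \<and> i < j}"

definition hc_space :: "nat \<Rightarrow> ((nat \<times> nat) \<Rightarrow> real) measure" where
  "hc_space n = PiM (hc_edges n) (\<lambda>_. borel)"

definition hc_null :: "nat \<Rightarrow> real measure \<Rightarrow> ((nat \<times> nat) \<Rightarrow> real) measure" where
  "hc_null n P = PiM (hc_edges n) (\<lambda>_. P)"

definition hc_planted :: "nat \<Rightarrow> real measure \<Rightarrow> real measure \<Rightarrow> nat set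
    \<Rightarrow> ((nat \<times> nat) \<Rightarrow> real) measure" where
  "hc_planted n P Q S = PiM (hc_edges n) (\<lambda>e. if e \<in> hc_clique_edges S then Q else P)"

definition hc_subsets :: "nat \<Rightarrow> nat \<Rightarrow> nat set set" where
  "hc_subsets n k = {S. S \<subseteq> {1..n} \<and> card S = k}"

definition hc_alt_prob :: "nat \<Rightarrow> nat \<Rightarrow> real measure \<Rightarrow> real measure
    \<Rightarrow> ((nat \<times> nat) \<Rightarrow> real) set \<Rightarrow> real" where
  "hc_alt_prob n k P Q A =
     (\<Sum>S\<in>hc_subsets n k. measure (hc_planted n P Q S) A) / real (card (hc_subsets n k))"

definition hc_risk :: "nat \<Rightarrow> nat \<Rightarrow> real measure \<Rightarrow> real measure
    \<Rightarrow> (((nat \<times> nat) \<Rightarrow> real) \<Rightarrow> bool) \<Rightarrow> real" where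
  "hc_risk n k P Q T =
     measure (hc_null n P) {x \<in> space (hc_space n). T x}
     + hc_alt_prob n k P Q {x \<in> space (hc_space n). \<not> T x}"

definition hc_optimal_risk :: "nat \<Rightarrow> nat \<Rightarrow> real measure \<Rightarrow> real measure \<Rightarrow> real" where
  "hc_optimal_risk n k P Q =
     (INF T \<in> {T. T \<in> measurable (hc_space n) (count_space UNIV)}. hc_risk n k P Q T)"

end

theory Submission
  imports Defs "HOL-Real_Asymp.Real_Asymp"
begin
lemma PiM_box:
  assumes "finite I" "\<And>i. prob_space (M i)" "\<And>i. i \<in> I \<Longrightarrow> A i \<in> sets (M i)"
  shows "measure (PiM I M) (PiE I A) = (\<Prod>i\<in>I. measure (M i) (A i))"
proof -
  interpret product_sigma_finite M
    unfolding product_sigma_finite_def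
    using assms(2) by (simp add: prob_space_imp_sigma_finite)
  have "emeasure (PiM I M) (PiE I A) = (\<Prod>i\<in>I. emeasure (M i) (A i))"
    using emeasure_PiM assms by blast
  also have "\<dots> = (\<Prod>i\<in>I. ennreal (measure (M i) (A i)))"
  proof (rule prod.cong)
    fix i assume "i \<in> I"
    interpret prob_space "M i" by fact
    show "emeasure (M i) (A i) = ennreal (measure (M i) (A i))" by (rule emeasure_eq_measure)
  qed simp
  also have "\<dots> = ennreal (\<Prod>i\<in>I. measure (M i) (A i))"
    by (simp add: prod_ennreal)
  finally show ?thesis unfolding measure_def by (simp add: prod_nonneg)
qed

definition hcG :: "nat pmf" where "hcG = geometric_pmf (1/2)"

lemma pmf_hcG: "pmf hcG j = (1/2)^(Suc j)"
  unfolding hcG_def by simp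

lemma set_pmf_hcG: "set_pmf hcG = UNIV"
  unfolding hcG_def by (rule set_pmf_geometric) auto

lemma hcG_lessThan: "measure_pmf.prob hcG {..<n} = 1 - (1/2)^n"
proof -
  have "(\<Sum>j<n. (1/2::real)^(Suc j)) = 1 - (1/2)^n"
    by (induction n) simp_all
  then show ?thesis by (simp add: measure_measure_pmf_finite pmf_hcG)
qed


definition hh :: "(nat \<Rightarrow> nat) \<Rightarrow> nat \<Rightarrow> nat" where
  "hh k n = Max {i. 16^i \<le> k n}"

lemma fin16: "finite {i::nat. (16::nat)^i \<le> K}"
proof (rule finite_subset)
  show "{i::nat. (16::nat)^i \<le> K} \<subseteq> {..K}"
  proof
    fix i assume "i \<in> {i::nat. (16::nat)^i \<le> K}"
    then have "16^i \<le> K" by simp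
    moreover have "i < (2::nat)^i" by (rule less_exp)
    moreover have "(2::nat)^i \<le> 16^i" by (rule power_mono) auto
    ultimately have "i \<le> K" by linarith
    then show "i \<in> {..K}" by simp
  qed
qed simp

lemma hh_le: assumes "1 \<le> k n" shows "16^(hh k n) \<le> k n"
proof -
  have "0 \<in> {i. (16::nat)^i \<le> k n}" using assms by simp
  then have "{i. (16::nat)^i \<le> k n} \<noteq> {}" by blast
  then show ?thesis unfolding hh_def using Max_in[OF fin16, of "k n"] by simp
qed

lemma hh_ge: "16^i \<le> k n \<Longrightarrow> i \<le> hh k n"
  unfolding hh_def using Max_ge[OF fin16, of i "k n"] by simp

lemma hh_fin:
  assumes "filterlim k at_top sequentially"
  shows "finite {m. hh k m \<le> i}"
proof -
  have "eventually (\<lambda>m. 16^(Suc i) \<le> k m) sequentially"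
    using assms by (simp add: filterlim_at_top)
  then obtain N where N: "\<And>m. m \<ge> N \<Longrightarrow> 16^(Suc i) \<le> k m"
    by (auto simp: eventually_sequentially)
  have "{m. hh k m \<le> i} \<subseteq> {..<N}"
  proof
    fix m assume "m \<in> {m. hh k m \<le> i}"
    then have "hh k m \<le> i" by simp
    show "m \<in> {..<N}"
    proof (rule ccontr)
      assume "m \<notin> {..<N}"
      then have "Suc i \<le> hh k m" using N hh_ge by simp
      then show False using \<open>hh k m \<le> i\<close> by simp
    qed
  qed
  then show ?thesis using finite_subset by blast
qed

definition psi :: "(nat \<Rightarrow> nat) \<Rightarrow> nat \<Rightarrow> nat" where
  "psi k j = (if even j then j div 2 else Max {m. hh k m \<le> j div 2})"

lemma psi_even: "psi k (2*m) = m"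
  unfolding psi_def by simp

lemma psi_ge:
  assumes "filterlim k at_top sequentially"
  shows "n \<le> psi k (2 * hh k n + 1)"
  unfolding psi_def using Max_ge[OF hh_fin[OF assms], of n "hh k n"] by simp

definition hP :: "real measure" where
  "hP = distr (measure_pmf hcG) borel real"

definition hQ :: "(nat \<Rightarrow> nat) \<Rightarrow> real measure" where
  "hQ k = distr (measure_pmf hcG) borel (\<lambda>j. real (psi k j))"

lemma null_distr_hcG:
  fixes f :: "nat \<Rightarrow> real"
  shows "A \<in> null_sets (distr (measure_pmf hcG) borel f) \<longleftrightarrow> A \<in> sets borel \<and> (\<forall>j. f j \<notin> A)"
proof -
  have m: "f \<in> measurable (measure_pmf hcG) borel" by simp
  have "A \<in> null_sets (distr (measure_pmf hcG) borel f) \<longleftrightarrow>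
      f -` A \<in> null_sets (measure_pmf hcG) \<and> A \<in> sets borel"
    using null_sets_distr_iff[OF m] by simp
  also have "f -` A \<in> null_sets (measure_pmf hcG) \<longleftrightarrow> measure_pmf.prob hcG (f -` A) = 0"
    by (simp add: measure_pmf.emeasure_eq_measure null_sets_def)
  also have "\<dots> \<longleftrightarrow> (\<forall>j. f j \<notin> A)"
    by (auto simp: measure_pmf_zero_iff set_pmf_hcG)
  finally show ?thesis by blast
qed

lemma hP_prob: "prob_space hP" and hP_sets: "sets hP = sets borel"
  unfolding hP_def by (auto intro!: measure_pmf.prob_space_distr)

lemma hQ_prob: "prob_space (hQ k)" and hQ_sets: "sets (hQ k) = sets borel"
  unfolding hQ_def by (auto intro!: measure_pmf.prob_space_distr)

lemma hPQ_null: "null_sets hP = null_sets (hQ k)"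
proof (intro set_eqI)
  fix A
  have "(\<forall>j. real (psi k j) \<notin> A) \<longleftrightarrow> (\<forall>j. real j \<notin> A)"
    by (metis psi_even)
  then show "A \<in> null_sets hP \<longleftrightarrow> A \<in> null_sets (hQ k)"
    unfolding hP_def hQ_def null_distr_hcG by simp
qed

lemma hP_less: "measure hP {..<real n} = 1 - (1/2)^n"
proof -
  have "measure hP {..<real n} = measure_pmf.prob hcG (real -` {..<real n})"
    unfolding hP_def by (subst measure_distr) auto
  also have "real -` {..<real n} = {..<n}" by auto
  finally show ?thesis by (simp add: hcG_lessThan)
qed

lemma hQ_less:
  assumes "n \<le> psi k j"
  shows "measure (hQ k) {..<real n} \<le> 1 - (1/2)^(Suc j)"
proof -
  have "measure (hQ k) {..<real n} = measure_pmf.prob hcG ((\<lambda>j. real (psi k j)) -` {..<real n})"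
    unfolding hQ_def by (subst measure_distr) auto
  also have "\<dots> \<le> measure_pmf.prob hcG (UNIV - {j})"
    using assms by (intro measure_pmf.finite_measure_mono) auto
  also have "\<dots> = 1 - pmf hcG j"
    using measure_pmf.prob_compl[of "{j}" hcG] by (simp add: measure_pmf_single)
  finally show ?thesis by (simp add: pmf_hcG)
qed


definition tst :: "nat \<Rightarrow> ((nat \<times> nat) \<Rightarrow> real) \<Rightarrow> bool" where
  "tst n x = (\<exists>e\<in>hc_edges n. real n \<le> x e)"

lemma finite_edges: "finite (hc_edges n)"
proof (rule finite_subset)
  show "hc_edges n \<subseteq> {1..n} \<times> {1..n}" unfolding hc_edges_def by auto
qed simp

lemma card_edges: "card (hc_edges n) \<le> n * n"
proof -
  have "card (hc_edges n) \<le> card ({1..n} \<times> {1..n})"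
    by (rule card_mono) (auto simp: hc_edges_def)
  then show ?thesis by simp
qed

lemma space_hc: "space (hc_space n) = PiE (hc_edges n) (\<lambda>_. UNIV)"
  unfolding hc_space_def by (simp add: space_PiM)

lemma notT_eq: "{x \<in> space (hc_space n). \<not> tst n x} = PiE (hc_edges n) (\<lambda>_. {..<real n})"
  unfolding space_hc tst_def by (auto simp: PiE_def Pi_def not_le)

lemma notT_sets: "{x \<in> space (hc_space n). \<not> tst n x} \<in> sets (hc_space n)"
proof -
  have "PiE (hc_edges n) (\<lambda>_. {..<real n}) \<in> sets (hc_space n)"
    unfolding hc_space_def by (rule sets_PiM_I_finite) (auto simp: finite_edges)
  then show ?thesis by (simp only: notT_eq)
qed

lemma tst_meas: "tst n \<in> measurable (hc_space n) (count_space UNIV)"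
proof -
  have "{x \<in> space (hc_space n). tst n x} = space (hc_space n) - {x \<in> space (hc_space n). \<not> tst n x}"
    by auto
  also have "\<dots> \<in> sets (hc_space n)" using notT_sets by auto
  finally show ?thesis using pred_def by blast
qed

lemma box_measure:
  assumes "\<And>e. prob_space (M e)" "\<And>e. sets (M e) = sets borel"
  shows "measure (PiM (hc_edges n) M) {x \<in> space (hc_space n). \<not> tst n x}
         = (\<Prod>e\<in>hc_edges n. measure (M e) {..<real n})"
  unfolding notT_eq using assms by (intro PiM_box) (auto simp: finite_edges)

lemma null_T:
  assumes "prob_space P" "sets P = sets borel"
  shows "measure (hc_null n P) {x \<in> space (hc_space n). tst n x}
         = 1 - (measure P {..<real n})^(card (hc_edges n))"
proof -
  interpret pp: prob_space "hc_null n P" unfolding hc_null_def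
    using assms by (intro prob_space_PiM) auto
  have sp: "space (hc_null n P) = space (hc_space n)"
    unfolding hc_null_def hc_space_def using sets_eq_imp_space_eq[OF assms(2)]
    by (simp add: space_PiM)
  have ss: "sets (hc_null n P) = sets (hc_space n)"
    unfolding hc_null_def hc_space_def using assms(2) by (intro sets_PiM_cong) auto
  have "{x \<in> space (hc_space n). tst n x} = space (hc_null n P) - {x \<in> space (hc_space n). \<not> tst n x}"
    using sp by auto
  then have "measure (hc_null n P) {x \<in> space (hc_space n). tst n x}
      = 1 - measure (hc_null n P) {x \<in> space (hc_space n). \<not> tst n x}"
    using pp.prob_compl notT_sets ss by simp
  also have "measure (hc_null n P) {x \<in> space (hc_space n). \<not> tst n x}
      = (\<Prod>e\<in>hc_edges n. measure P {..<real n})"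
    unfolding hc_null_def using assms by (intro box_measure) auto
  finally show ?thesis by simp
qed


lemma prod_sub_le:
  fixes f :: "'a \<Rightarrow> real"
  assumes "finite A" "B \<subseteq> A" "\<And>x. x \<in> A \<Longrightarrow> 0 \<le> f x \<and> f x \<le> 1"
  shows "prod f A \<le> prod f B"
proof -
  have "prod f A = prod f (A - B) * prod f B"
    using prod.subset_diff[OF assms(2,1)] by simp
  also have "\<dots> \<le> 1 * prod f B"
  proof (rule mult_right_mono)
    show "prod f (A - B) \<le> 1" using assms by (intro prod_le_1) auto
    show "0 \<le> prod f B" using assms by (intro prod_nonneg) auto
  qed
  finally show ?thesis by simp
qed

lemma planted_bound:
  assumes "prob_space P" "sets P = sets borel" "prob_space Q" "sets Q = sets borel"
    and S: "S \<subseteq> {1..n}" "card S = K" "2 \<le> K"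
  shows "measure (hc_planted n P Q S) {x \<in> space (hc_space n). \<not> tst n x}
         \<le> (measure Q {..<real n})^(K-1)"
proof -
  let ?M = "\<lambda>e. if e \<in> hc_clique_edges S then Q else P"
  let ?f = "\<lambda>e. measure (?M e) {..<real n}"
  have eq: "measure (hc_planted n P Q S) {x \<in> space (hc_space n). \<not> tst n x}
         = (\<Prod>e\<in>hc_edges n. ?f e)"
    unfolding hc_planted_def using assms by (intro box_measure) auto
  have fin: "finite S" using S by (metis card.infinite not_numeral_le_zero)
  then have ne: "S \<noteq> {}" using S by auto
  define s0 where "s0 = Min S"
  have s0S: "s0 \<in> S" unfolding s0_def using fin ne by simp
  define St where "St = (\<lambda>s. (s0, s)) ` (S - {s0})"
  have cSt: "card St = K - 1"
    unfolding St_def using S fin s0S by (subst card_image) (auto intro: inj_onI)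
  have lt: "s0 < s" if "s \<in> S - {s0}" for s
    using that fin unfolding s0_def by (metis DiffE Min_le insertI1 nless_le)
  have StE: "St \<subseteq> hc_edges n"
    unfolding St_def hc_edges_def using lt s0S S(1) by (force)
  have StC: "St \<subseteq> hc_clique_edges S"
    unfolding St_def hc_clique_edges_def using lt s0S by auto
  have "(\<Prod>e\<in>hc_edges n. ?f e) \<le> (\<Prod>e\<in>St. ?f e)"
  proof (rule prod_sub_le[OF finite_edges StE])
    fix e
    show "0 \<le> ?f e \<and> ?f e \<le> 1"
      using assms(1,3) by (simp add: prob_space.prob_le_1)
  qed
  also have "(\<Prod>e\<in>St. ?f e) = (\<Prod>e\<in>St. measure Q {..<real n})"
    using StC by (intro prod.cong) auto
  also have "\<dots> = (measure Q {..<real n})^(K-1)" using cSt by simp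
  finally show ?thesis using eq by simp
qed

lemma alt_bound:
  assumes "prob_space P" "sets P = sets borel" "prob_space Q" "sets Q = sets borel" "2 \<le> K"
  shows "hc_alt_prob n K P Q {x \<in> space (hc_space n). \<not> tst n x}
         \<le> (measure Q {..<real n})^(K-1)"
proof -
  let ?B = "(measure Q {..<real n})^(K-1)"
  have "(\<Sum>S\<in>hc_subsets n K. measure (hc_planted n P Q S) {x \<in> space (hc_space n). \<not> tst n x})
        \<le> real (card (hc_subsets n K)) * ?B"
    using planted_bound[OF assms(1-4) _ _ assms(5)]
    by (intro sum_bounded_above) (auto simp: hc_subsets_def)
  moreover have "0 \<le> ?B" by simp
  ultimately show ?thesis unfolding hc_alt_prob_def
    by (cases "card (hc_subsets n K) = 0") (auto simp: divide_le_eq mult.commute)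
qed

lemma risk_nonneg: "0 \<le> hc_risk n K P Q T"
  unfolding hc_risk_def hc_alt_prob_def by (intro add_nonneg_nonneg divide_nonneg_nonneg sum_nonneg) auto


lemma sqrt_bound:
  fixes K y :: real
  assumes "2 \<le> K" "0 < y" "y \<le> sqrt K"
  shows "sqrt K / 8 \<le> (K - 1) * (1 / (4 * y))"
proof -
  have "sqrt K * sqrt K = K" using assms by simp
  moreover have "y * sqrt K \<le> sqrt K * sqrt K" using assms by (intro mult_right_mono) auto
  ultimately have "y * sqrt K \<le> K" by simp
  moreover have "sqrt K * (4 * y) = 4 * (y * sqrt K)" by simp
  moreover have "4 * K \<le> 8 * (K - 1)" using assms by simp
  ultimately have "sqrt K * (4 * y) \<le> 8 * (K - 1)" by (smt (verit))
  then show ?thesis using assms by (simp add: field_simps)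
qed

lemma second_term:
  assumes k: "filterlim k at_top sequentially" and K: "2 \<le> k n"
  shows "(measure (hQ k) {..<real n})^(k n - 1) \<le> exp (- sqrt (real (k n)) / 8)"
proof -
  define h where "h = hh k n"
  define c :: real where "c = (1/2)^(Suc (2 * h + 1))"
  have b: "measure (hQ k) {..<real n} \<le> 1 - c"
    unfolding c_def h_def by (rule hQ_less[OF psi_ge[OF k]])
  have b0: "0 \<le> measure (hQ k) {..<real n}" by simp
  have "(measure (hQ k) {..<real n})^(k n - 1) \<le> (1 - c)^(k n - 1)"
    using b b0 by (intro power_mono) auto
  also have "\<dots> \<le> (exp (- c))^(k n - 1)"
  proof (intro power_mono)
    show "1 - c \<le> exp (- c)" using exp_ge_add_one_self[of "-c"] by simp
    show "0 \<le> 1 - c" using b b0 by linarith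
  qed
  also have "\<dots> = exp (- (c * real (k n - 1)))"
    by (simp add: exp_of_nat_mult[symmetric] mult.commute)
  also have "\<dots> \<le> exp (- sqrt (real (k n)) / 8)"
  proof -
    define y :: real where "y = 4^h"
    have y0: "0 < y" unfolding y_def by simp
    have "y * y = real (16^h)" unfolding y_def by (simp add: power_mult_distrib[symmetric])
    also have "\<dots> \<le> real (k n)" using hh_le[of k n] K unfolding h_def by simp
    finally have "y \<le> sqrt (real (k n))" using y0 by (simp add: real_le_rsqrt power2_eq_square)
    then have "sqrt (real (k n)) / 8 \<le> (real (k n) - 1) * (1 / (4 * y))"
      using sqrt_bound[of "real (k n)" y] K y0 by simp
    moreover have "c = 1 / (4 * y)"
    proof -
      have e1: "(2::real)^(2*h) = 4^h" by (simp add: power_mult)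
      have "(2::real)^(Suc (2 * h + 1)) = 4 * 2^(2*h)" by simp
      then have "(2::real)^(Suc (2 * h + 1)) = 4 * y" using e1 unfolding y_def by simp
      then show ?thesis unfolding c_def by (simp add: power_one_over)
    qed
    moreover have "real (k n - 1) = real (k n) - 1" using K by simp
    ultimately show ?thesis by (simp add: mult.commute)
  qed
  finally show ?thesis .
qed

lemma first_term:
  fixes a :: real
  assumes "0 \<le> a" "a \<le> 1"
  shows "1 - (1 - a)^N \<le> real N * a"
  using Bernoulli_inequality[of "-a" N] assms by simp

lemma lim_u:
  assumes k: "filterlim k at_top sequentially"
  shows "(\<lambda>n. real n * real n * (1/2)^n + exp (- sqrt (real (k n)) / 8)) \<longlonglongrightarrow> 0"
proof -
  have 1: "(\<lambda>n. real n * real n * (1/2::real)^n) \<longlonglongrightarrow> 0" by real_asymp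
  have e: "((\<lambda>x::real. exp (- sqrt x / 8)) \<longlongrightarrow> 0) at_top" by real_asymp
  have r: "filterlim (\<lambda>n. real (k n)) at_top sequentially"
    by (rule filterlim_compose[OF filterlim_real_sequentially k])
  have 2: "(\<lambda>n. exp (- sqrt (real (k n)) / 8)) \<longlonglongrightarrow> 0"
    using filterlim_compose[OF e r] by simp
  show ?thesis using tendsto_add[OF 1 2] by simp
qed

theorem mainTheorem3:
  fixes k :: "nat \<Rightarrow> nat"
  assumes "\<forall>n\<ge>2. 2 \<le> k n \<and> k n \<le> n"
    and "filterlim k at_top sequentially"
  shows "\<exists>P Q :: real measure.
           prob_space P \<and> prob_space Q \<and>
           sets P = sets borel \<and> sets Q = sets borel \<and>
           absolutely_continuous P Q \<and> absolutely_continuous Q P \<and>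
           (\<lambda>n. hc_optimal_risk n (k n) P Q) \<longlonglongrightarrow> 0"
proof (intro exI conjI)
  show "prob_space hP" "prob_space (hQ k)" "sets hP = sets borel" "sets (hQ k) = sets borel"
    by (rule hP_prob hQ_prob hP_sets hQ_sets)+
  show "absolutely_continuous hP (hQ k)" "absolutely_continuous (hQ k) hP"
    unfolding absolutely_continuous_def using hPQ_null[of k] by auto
  let ?u = "\<lambda>n. real n * real n * (1/2)^n + exp (- sqrt (real (k n)) / 8)"
  let ?A = "\<lambda>n. {T. T \<in> measurable (hc_space n) (count_space UNIV)}"
  show "(\<lambda>n. hc_optimal_risk n (k n) hP (hQ k)) \<longlonglongrightarrow> 0"
  proof (rule tendsto_sandwich[of "\<lambda>_. 0" _ _ ?u])
    show "((\<lambda>_. 0::real) \<longlongrightarrow> 0) sequentially" by simp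
    show "?u \<longlonglongrightarrow> 0" using lim_u[OF assms(2)] .
    show "eventually (\<lambda>n. 0 \<le> hc_optimal_risk n (k n) hP (hQ k)) sequentially"
      unfolding hc_optimal_risk_def
      using tst_meas by (intro always_eventually allI cINF_greatest risk_nonneg) auto
    have "hc_optimal_risk n (k n) hP (hQ k) \<le> ?u n" if n: "n \<ge> 2" for n
    proof -
      have K: "2 \<le> k n" using assms(1) n by simp
      have "hc_optimal_risk n (k n) hP (hQ k) \<le> hc_risk n (k n) hP (hQ k) (tst n)"
        unfolding hc_optimal_risk_def
        by (rule cINF_lower) (auto intro!: bdd_belowI2 risk_nonneg tst_meas)
      also have "\<dots> \<le> (1 - (measure hP {..<real n})^(card (hc_edges n)))
                      + (measure (hQ k) {..<real n})^(k n - 1)"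
        unfolding hc_risk_def
        using null_T[OF hP_prob hP_sets] alt_bound[OF hP_prob hP_sets hQ_prob hQ_sets K]
        by simp
      also have "\<dots> \<le> real n * real n * (1/2)^n + exp (- sqrt (real (k n)) / 8)"
      proof (rule add_mono)
        have "1 - (measure hP {..<real n})^(card (hc_edges n))
              \<le> real (card (hc_edges n)) * (1/2)^n"
          unfolding hP_less by (rule first_term) (auto simp: power_le_one)
        also have "\<dots> \<le> real n * real n * (1/2)^n"
          using card_edges[of n] by (intro mult_right_mono) (auto simp flip: of_nat_mult)
        finally show "1 - (measure hP {..<real n})^(card (hc_edges n)) \<le> real n * real n * (1/2)^n" .
        show "(measure (hQ k) {..<real n})^(k n - 1) \<le> exp (- sqrt (real (k n)) / 8)"
          by (rule second_term[OF assms(2) K])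
      qed
      finally show ?thesis .
    qed
    then show "eventually (\<lambda>n. hc_optimal_risk n (k n) hP (hQ k) \<le> ?u n) sequentially"
      unfolding eventually_sequentially by blast
  qed
qed

end
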